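(* Let $t\in[0,1]$. For each $n$ let $\boldsymbol{M}\in\mathbb{R}^{n\times n}$ be a deterministic matrix with $\|\boldsymbol{M}\|_{\mathrm{op}}\le1$, and let $b=b_n$ satisfy $|b|=\Omega(n^{-t/(1+t)})$ if $t<1$, or $|b|=\omega(n^{-1/2})$ if $t=1$. Let $\boldsymbol{w}$ and $\boldsymbol{\xi}$ be independent random vectors in $\mathbb{R}^n$ with i.i.d. entries from $\mathbb{P}_w\in\mathcal{D}_1\cup\mathcal{D}_2$ and $\mathbb{P}_\xi\in\mathcal{D}_{1+t}$ respectively (not depending on $n$). Then for any fixed $\delta>0$, $$\lim_{n\to\infty}\mathbb{P}\Bigl(\frac{|\boldsymbol{w}^\top\boldsymbol{M}\boldsymbol{\xi}|}{b\|\boldsymbol{w}\|_2^2}>\delta\Bigr)=0.$$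
   Context: For $s>0$, $\mathcal{D}_s$ is the class of distributions of $\xi$ with $\mathbb{E}[\xi]=0$ and $1\le\mathbb{E}[|\xi|^s]\le2$. $|b|=\Omega(c_n)$ means $|c_n|\le C|b|$ for a constant $C>0$; $b=\omega(c_n)$ means $|c_n|/|b|\to0$. Convention: $a/0=\infty$. *)

theory Defs
  imports "HOL-Probability.Probability"
begin

definition Dclass :: "real \<Rightarrow> real measure set" where
  "Dclass s = {P. prob_space P \<and> sets P = sets borel \<and>
      integrable P (\<lambda>x. x) \<and> (\<integral>x. x \<partial>P) = 0 \<and>
      1 \<le> (\<integral>\<^sup>+ x. ennreal (\<bar>x\<bar> powr s) \<partial>P) \<and>
      (\<integral>\<^sup>+ x. ennreal (\<bar>x\<bar> powr s) \<partial>P) \<le> 2}"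

definition vnorm :: "nat \<Rightarrow> (nat \<Rightarrow> real) \<Rightarrow> real" where
  "vnorm n x = sqrt (\<Sum>j<n. (x j)\<^sup>2)"

definition mvec :: "nat \<Rightarrow> (nat \<Rightarrow> nat \<Rightarrow> real) \<Rightarrow> (nat \<Rightarrow> real) \<Rightarrow> (nat \<Rightarrow> real)" where
  "mvec n A x = (\<lambda>i. \<Sum>j<n. A i j * x j)"

definition opnorm_le1 :: "nat \<Rightarrow> (nat \<Rightarrow> nat \<Rightarrow> real) \<Rightarrow> bool" where
  "opnorm_le1 n A \<longleftrightarrow> (\<forall>x. vnorm n (mvec n A x) \<le> vnorm n x)"

text \<open>The event |w^T M xi| / (b |w|^2) > delta, with the convention a/0 = infinity.\<close>
definition ratio_event :: "nat \<Rightarrow> (nat \<Rightarrow> nat \<Rightarrow> real) \<Rightarrow> real \<Rightarrow> real \<Rightarrow>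
    (nat \<Rightarrow> real) \<Rightarrow> (nat \<Rightarrow> real) \<Rightarrow> bool" where
  "ratio_event n A b \<delta> w xi \<longleftrightarrow>
     (let num = \<bar>\<Sum>i<n. w i * mvec n A xi i\<bar>; den = b * (vnorm n w)\<^sup>2 in
      den = 0 \<or> num / den > \<delta>)"

end

theory Submission
  imports Defs
begin



lemma pi_single_int:
  fixes P :: "real measure" and h :: "real \<Rightarrow> real"
  assumes P: "prob_space P" and j: "j \<in> I" and h: "h \<in> borel_measurable P"
  shows "(\<integral>x. h (x j) \<partial>PiM I (\<lambda>_. P)) = integral\<^sup>L P h"
proof -
  have "distr (PiM I (\<lambda>_. P)) P (\<lambda>x. x j) = P"
    using distr_PiM_component[of I "\<lambda>_. P" j] P j by auto
  then have "integral\<^sup>L P h = integral\<^sup>L (distr (PiM I (\<lambda>_. P)) P (\<lambda>x. x j)) h" by simp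
  also have "\<dots> = (\<integral>x. h (x j) \<partial>PiM I (\<lambda>_. P))"
    using j h by (intro integral_distr measurable_component_singleton) auto
  finally show ?thesis by simp
qed

lemma pi_pair_int:
  fixes P :: "real measure" and h1 h2 :: "real \<Rightarrow> real"
  assumes P: "prob_space P" and fin: "finite I" and j: "j \<in> I" and k: "k \<in> I" and jk: "j \<noteq> k"
    and h1: "integrable P h1" and h2: "integrable P h2"
  shows "(\<integral>x. h1 (x j) * h2 (x k) \<partial>PiM I (\<lambda>_. P)) = integral\<^sup>L P h1 * integral\<^sup>L P h2"
proof -
  interpret PP: prob_space P by fact
  interpret product_prob_space "\<lambda>_. P" I by unfold_locales
  define f where "f = (\<lambda>i. if i = j then h1 else if i = k then h2 else (\<lambda>_::real. 1::real))"
  have eq: "(\<Prod>i\<in>I. f i (x i)) = h1 (x j) * h2 (x k)" for x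
  proof -
    have "(\<Prod>i\<in>I. f i (x i)) = f j (x j) * (\<Prod>i\<in>I - {j}. f i (x i))"
      using fin j by (simp add: prod.remove)
    also have "(\<Prod>i\<in>I - {j}. f i (x i)) = f k (x k) * (\<Prod>i\<in>I - {j} - {k}. f i (x i))"
      using fin j k jk by (subst prod.remove[of _ k]) auto
    also have "(\<Prod>i\<in>I - {j} - {k}. f i (x i)) = 1"
      by (rule prod.neutral) (auto simp: f_def)
    finally show ?thesis using jk by (simp add: f_def)
  qed
  have "(\<integral>x. h1 (x j) * h2 (x k) \<partial>PiM I (\<lambda>_. P)) = (\<integral>x. (\<Prod>i\<in>I. f i (x i)) \<partial>PiM I (\<lambda>_. P))"
    by (simp only: eq)
  also have "(\<integral>x. (\<Prod>i\<in>I. f i (x i)) \<partial>PiM I (\<lambda>_. P)) = (\<Prod>i\<in>I. integral\<^sup>L P (f i))"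
    by (rule product_integral_prod) (use fin h1 h2 in \<open>auto simp: f_def\<close>)
  also have "(\<Prod>i\<in>I. integral\<^sup>L P (f i)) = integral\<^sup>L P (f j) * (\<Prod>i\<in>I - {j}. integral\<^sup>L P (f i))"
    using fin j by (simp add: prod.remove)
  also have "(\<Prod>i\<in>I - {j}. integral\<^sup>L P (f i)) = integral\<^sup>L P (f k) * (\<Prod>i\<in>I - {j} - {k}. integral\<^sup>L P (f i))"
    using fin j k jk by (subst prod.remove[of _ k]) auto
  also have "(\<Prod>i\<in>I - {j} - {k}. integral\<^sup>L P (f i)) = 1"
  proof (rule prod.neutral)
    have one: "integral\<^sup>L P (\<lambda>_::real. 1::real) = 1"
      using prob_space.prob_space[OF assms(1)] by simp
    show "\<forall>x\<in>I - {j} - {k}. integral\<^sup>L P (f x) = 1" using one by (simp add: f_def)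
  qed
  finally show ?thesis using jk by (simp add: f_def)
qed

lemma cheb_pi:
  fixes P :: "real measure" and g :: "real \<Rightarrow> real" and u :: "nat \<Rightarrow> real"
  assumes P: "prob_space P" and fin: "finite I"
    and g: "g \<in> borel_measurable P" and bnd: "\<And>x. \<bar>g x\<bar> \<le> K"
    and mean: "integral\<^sup>L P g = 0" and var: "integral\<^sup>L P (\<lambda>x. (g x)\<^sup>2) \<le> V"
    and L: "L > 0"
  shows "measure (PiM I (\<lambda>_. P)) {x \<in> space (PiM I (\<lambda>_. P)). L \<le> \<bar>\<Sum>j\<in>I. u j * g (x j)\<bar>}
          \<le> (\<Sum>j\<in>I. (u j)\<^sup>2) * V / L\<^sup>2"
proof -
  interpret P: prob_space P by fact
  interpret Q: prob_space "PiM I (\<lambda>_. P)" by (rule prob_space_PiM) (use P in auto)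
  have gm[measurable]: "(\<lambda>x. g (x j)) \<in> borel_measurable (PiM I (\<lambda>_. P))" if "j \<in> I" for j
    by (rule measurable_compose[OF measurable_component_singleton[OF that] g])
  have intg: "integrable P g" using g bnd by (intro P.integrable_const_bound[where B=K]) auto
  have sq: "(g x)\<^sup>2 \<le> K\<^sup>2" for x using power_mono[OF bnd[of x] abs_ge_zero, of 2] by simp
  have intg2: "integrable P (\<lambda>x. (g x)\<^sup>2)"
    using g sq by (intro P.integrable_const_bound[where B="K\<^sup>2"]) auto
  define S where "S = (\<lambda>x. \<Sum>j\<in>I. u j * g (x j))"
  have Sm[measurable]: "S \<in> borel_measurable (PiM I (\<lambda>_. P))" unfolding S_def
    by (intro borel_measurable_sum borel_measurable_times borel_measurable_const gm) auto
  have intpair: "integrable (PiM I (\<lambda>_. P)) (\<lambda>x. g (x j) * g (x k))" if "j \<in> I" "k \<in> I" for j k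
    using that bnd by (intro Q.integrable_const_bound[where B="K*K"])
      (auto simp: abs_mult intro!: mult_mono' order_trans[OF _ bnd])
  have E1: "(\<integral>x. g (x j) \<partial>PiM I (\<lambda>_. P)) = 0" if "j \<in> I" for j
    using pi_single_int[OF P that g] mean by simp
  have E2: "(\<integral>x. g (x j) * g (x k) \<partial>PiM I (\<lambda>_. P)) = (if j = k then integral\<^sup>L P (\<lambda>x. (g x)\<^sup>2) else 0)"
    if "j \<in> I" "k \<in> I" for j k
  proof (cases "j = k")
    case True
    then show ?thesis using pi_single_int[OF P that(1), of "\<lambda>x. (g x)\<^sup>2"] g
      by (simp add: power2_eq_square)
  next
    case False
    then show ?thesis using pi_pair_int[OF P fin that False intg intg] mean by simp
  qed
  have intg1: "integrable (PiM I (\<lambda>_. P)) (\<lambda>x. g (x j))" if "j \<in> I" for j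
    using that bnd by (intro Q.integrable_const_bound[where B="K"]) auto
  have ES: "Q.expectation S = 0"
  proof -
    have "Q.expectation S = (\<Sum>j\<in>I. \<integral>x. u j * g (x j) \<partial>PiM I (\<lambda>_. P))"
      unfolding S_def by (rule Bochner_Integration.integral_sum) (use intg1 in auto)
    also have "\<dots> = 0" using E1 by simp
    finally show ?thesis .
  qed
  have S2: "(S x)\<^sup>2 = (\<Sum>j\<in>I. \<Sum>k\<in>I. u j * u k * (g (x j) * g (x k)))" for x
    unfolding S_def power2_eq_square sum_product by (intro sum.cong refl) (simp add: algebra_simps)
  have intS2: "integrable (PiM I (\<lambda>_. P)) (\<lambda>x. (S x)\<^sup>2)"
    unfolding S2 by (intro Bochner_Integration.integrable_sum Bochner_Integration.integrable_mult_right) (use intpair in auto)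
  have "Q.expectation (\<lambda>x. (S x)\<^sup>2) = (\<Sum>j\<in>I. \<Sum>k\<in>I. u j * u k * (\<integral>x. g (x j) * g (x k) \<partial>PiM I (\<lambda>_. P)))"
  proof -
    have "Q.expectation (\<lambda>x. (S x)\<^sup>2) = (\<Sum>j\<in>I. \<integral>x. (\<Sum>k\<in>I. u j * u k * (g (x j) * g (x k))) \<partial>PiM I (\<lambda>_. P))"
      unfolding S2 by (rule Bochner_Integration.integral_sum)
        (intro Bochner_Integration.integrable_sum Bochner_Integration.integrable_mult_right, use intpair in auto)
    also have "\<dots> = (\<Sum>j\<in>I. \<Sum>k\<in>I. \<integral>x. u j * u k * (g (x j) * g (x k)) \<partial>PiM I (\<lambda>_. P))"
    proof (rule sum.cong[OF refl])
      fix j assume j: "j \<in> I"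
      show "(\<integral>x. (\<Sum>k\<in>I. u j * u k * (g (x j) * g (x k))) \<partial>PiM I (\<lambda>_. P))
          = (\<Sum>k\<in>I. \<integral>x. u j * u k * (g (x j) * g (x k)) \<partial>PiM I (\<lambda>_. P))"
        by (rule Bochner_Integration.integral_sum) (use intpair j in auto)
    qed
    also have "\<dots> = (\<Sum>j\<in>I. \<Sum>k\<in>I. u j * u k * (\<integral>x. g (x j) * g (x k) \<partial>PiM I (\<lambda>_. P)))"
      by simp
    finally show ?thesis .
  qed
  also have "\<dots> = (\<Sum>j\<in>I. (u j)\<^sup>2 * integral\<^sup>L P (\<lambda>x. (g x)\<^sup>2))"
  proof (rule sum.cong[OF refl])
    fix j assume j: "j \<in> I"
    have "(\<Sum>k\<in>I. u j * u k * (\<integral>x. g (x j) * g (x k) \<partial>PiM I (\<lambda>_. P)))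
        = (\<Sum>k\<in>I. if k = j then u j * u j * integral\<^sup>L P (\<lambda>x. (g x)\<^sup>2) else 0)"
    proof (rule sum.cong[OF refl])
      fix k assume k: "k \<in> I"
      show "u j * u k * (\<integral>x. g (x j) * g (x k) \<partial>PiM I (\<lambda>_. P))
          = (if k = j then u j * u j * integral\<^sup>L P (\<lambda>x. (g x)\<^sup>2) else 0)"
        using E2[OF j k] by auto
    qed
    also have "\<dots> = u j * u j * integral\<^sup>L P (\<lambda>x. (g x)\<^sup>2)" using fin j by simp
    finally show "(\<Sum>k\<in>I. u j * u k * (\<integral>x. g (x j) * g (x k) \<partial>PiM I (\<lambda>_. P)))
        = (u j)\<^sup>2 * integral\<^sup>L P (\<lambda>x. (g x)\<^sup>2)" by (simp add: power2_eq_square)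
  qed
  also have "\<dots> \<le> (\<Sum>j\<in>I. (u j)\<^sup>2 * V)"
    by (intro sum_mono mult_left_mono var) auto
  finally have ES2: "Q.expectation (\<lambda>x. (S x)\<^sup>2) \<le> (\<Sum>j\<in>I. (u j)\<^sup>2) * V"
    by (simp add: sum_distrib_right)
  have ch: "measure (PiM I (\<lambda>_. P)) {x \<in> space (PiM I (\<lambda>_. P)). L \<le> \<bar>S x - Q.expectation S\<bar>}
         \<le> Q.variance S / L\<^sup>2"
    by (rule Q.Chebyshev_inequality[OF Sm intS2 L])
  have va: "Q.variance S = Q.expectation (\<lambda>x. (S x)\<^sup>2)" using ES by simp
  have se: "{x \<in> space (PiM I (\<lambda>_. P)). L \<le> \<bar>S x - Q.expectation S\<bar>}
      = {x \<in> space (PiM I (\<lambda>_. P)). L \<le> \<bar>\<Sum>j\<in>I. u j * g (x j)\<bar>}"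
    using ES by (simp add: S_def)
  have "measure (PiM I (\<lambda>_. P)) {x \<in> space (PiM I (\<lambda>_. P)). L \<le> \<bar>\<Sum>j\<in>I. u j * g (x j)\<bar>}
      \<le> Q.expectation (\<lambda>x. (S x)\<^sup>2) / L\<^sup>2"
    using ch unfolding se va .
  also have "\<dots> \<le> (\<Sum>j\<in>I. (u j)\<^sup>2) * V / L\<^sup>2"
    by (rule divide_right_mono[OF ES2]) simp
  finally show ?thesis .
qed



definition tau :: "real measure \<Rightarrow> real \<Rightarrow> real \<Rightarrow> real" where
  "tau P s T = (\<integral>x. (if T < \<bar>x\<bar> then \<bar>x\<bar> powr s else 0) \<partial>P)"

locale momP =
  fixes P :: "real measure" and s :: real
  assumes P: "prob_space P" and sP: "sets P = sets borel" and intx: "integrable P (\<lambda>x. x)"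
    and mean0: "(\<integral>x. x \<partial>P) = 0" and mom: "(\<integral>\<^sup>+ x. ennreal (\<bar>x\<bar> powr s) \<partial>P) \<le> 2"
    and s1: "1 \<le> s" and s2: "s \<le> 2"
begin

interpretation prob_space P by (rule P)

lemma mP: "borel_measurable P = borel_measurable borel"
  by (rule measurable_cong_sets) (auto simp: sP)

lemma sets_P: "A \<in> sets borel \<Longrightarrow> A \<in> sets P" using sP by simp

lemma int_mom: "integrable P (\<lambda>x. \<bar>x\<bar> powr s)"
proof (rule integrableI_bounded)
  show "(\<lambda>x. \<bar>x\<bar> powr s) \<in> borel_measurable P" unfolding mP by measurable
  show "(\<integral>\<^sup>+ x. ennreal (norm (\<bar>x\<bar> powr s)) \<partial>P) < \<infinity>"
    using mom by (simp add: order_le_less_trans)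
qed

lemma int_mom_le: "(\<integral>x. \<bar>x\<bar> powr s \<partial>P) \<le> 2"
proof -
  have "ennreal (\<integral>x. \<bar>x\<bar> powr s \<partial>P) = (\<integral>\<^sup>+ x. ennreal (\<bar>x\<bar> powr s) \<partial>P)"
    by (rule nn_integral_eq_integral[symmetric]) (use int_mom in auto)
  then show ?thesis using mom by (metis ennreal_le_iff ennreal_numeral zero_le_numeral)
qed

lemma int_tailf: "integrable P (\<lambda>x. if T < \<bar>x\<bar> then \<bar>x\<bar> powr s else 0)"
  by (rule Bochner_Integration.integrable_bound[OF int_mom]) (auto simp: mP)

lemma tau_nonneg: "0 \<le> tau P s T"
  unfolding tau_def by (rule integral_nonneg_AE) auto

lemma tau_le: "tau P s T \<le> 2"
proof -
  have "tau P s T \<le> (\<integral>x. \<bar>x\<bar> powr s \<partial>P)"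
    unfolding tau_def by (rule integral_mono[OF int_tailf int_mom]) auto
  then show ?thesis using int_mom_le by simp
qed

lemma tau_lim: "((\<lambda>T. tau P s T) \<longlongrightarrow> 0) at_top"
proof -
  have "((\<lambda>T. integral\<^sup>L P (\<lambda>x. if T < \<bar>x\<bar> then \<bar>x\<bar> powr s else 0)) \<longlongrightarrow> integral\<^sup>L P (\<lambda>x. 0::real)) at_top"
  proof (rule integral_dominated_convergence_at_top[where w="\<lambda>x. \<bar>x\<bar> powr s"])
    show "(\<lambda>x. 0::real) \<in> borel_measurable P" by simp
    show "(\<lambda>x. if T < \<bar>x\<bar> then \<bar>x\<bar> powr s else 0) \<in> borel_measurable P" for T
      unfolding mP by measurable
    show "integrable P (\<lambda>x. \<bar>x\<bar> powr s)" by (rule int_mom)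
    show "AE x in P. ((\<lambda>T. if T < \<bar>x\<bar> then \<bar>x\<bar> powr s else 0) \<longlongrightarrow> 0) at_top"
    proof (rule AE_I2)
      fix x :: real
      have "eventually (\<lambda>T. (if T < \<bar>x\<bar> then \<bar>x\<bar> powr s else 0) = 0) at_top"
        using eventually_ge_at_top[of "\<bar>x\<bar>"] by eventually_elim auto
      then show "((\<lambda>T. if T < \<bar>x\<bar> then \<bar>x\<bar> powr s else 0) \<longlongrightarrow> 0) at_top"
        by (rule tendsto_eventually)
    qed
    show "\<forall>\<^sub>F T in at_top. AE x in P. norm (if T < \<bar>x\<bar> then \<bar>x\<bar> powr s else 0) \<le> \<bar>x\<bar> powr s"
      by (intro always_eventually allI AE_I2) auto
  qed
  then show ?thesis unfolding tau_def by simp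
qed

lemma tail_prob:
  assumes T: "T > 0"
  shows "measure P {x. T < \<bar>x\<bar>} \<le> T powr (-s) * tau P s T"
proof -
  have A: "{x. T < \<bar>x\<bar>} \<in> sets P" by (rule sets_P) measurable
  have "measure P {x. T < \<bar>x\<bar>} = (\<integral>x. indicator {x. T < \<bar>x\<bar>} x \<partial>P)"
    using A by simp
  also have "\<dots> \<le> (\<integral>x. T powr (-s) * (if T < \<bar>x\<bar> then \<bar>x\<bar> powr s else 0) \<partial>P)"
  proof (rule integral_mono)
    show "integrable P (indicator {x. T < \<bar>x\<bar>} :: real \<Rightarrow> real)"
      using A by (intro integrable_real_indicator) (auto simp: emeasure_eq_measure)
    show "integrable P (\<lambda>x. T powr (-s) * (if T < \<bar>x\<bar> then \<bar>x\<bar> powr s else 0))"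
      by (intro integrable_mult_right int_tailf)
    fix x :: real
    show "indicator {x. T < \<bar>x\<bar>} x \<le> T powr (-s) * (if T < \<bar>x\<bar> then \<bar>x\<bar> powr s else 0)"
    proof (cases "T < \<bar>x\<bar>")
      case True
      have "T powr s \<le> \<bar>x\<bar> powr s" using True T s1 by (intro powr_mono2) auto
      then have "1 \<le> T powr (-s) * \<bar>x\<bar> powr s" using T
        by (simp add: powr_minus divide_simps)
      then show ?thesis using True by simp
    qed auto
  qed
  also have "\<dots> = T powr (-s) * tau P s T" unfolding tau_def by simp
  finally show ?thesis .
qed

lemma tail_mean:
  assumes T: "T > 0"
  shows "\<bar>\<integral>x. (if \<bar>x\<bar> \<le> T then x else 0) \<partial>P\<bar> \<le> T powr (1 - s) * tau P s T"
proof -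
  have i1: "integrable P (\<lambda>x. if \<bar>x\<bar> \<le> T then x else 0)"
    by (rule Bochner_Integration.integrable_bound[OF intx]) (auto simp: mP)
  have i2: "integrable P (\<lambda>x. if T < \<bar>x\<bar> then x else 0)"
    by (rule Bochner_Integration.integrable_bound[OF intx]) (auto simp: mP)
  have "(\<integral>x. x \<partial>P) = (\<integral>x. (if \<bar>x\<bar> \<le> T then x else 0) + (if T < \<bar>x\<bar> then x else 0) \<partial>P)"
    by (intro Bochner_Integration.integral_cong) auto
  also have "\<dots> = (\<integral>x. (if \<bar>x\<bar> \<le> T then x else 0) \<partial>P) + (\<integral>x. (if T < \<bar>x\<bar> then x else 0) \<partial>P)"
    using i1 i2 by simp
  finally have eq: "(\<integral>x. (if \<bar>x\<bar> \<le> T then x else 0) \<partial>P) = - (\<integral>x. (if T < \<bar>x\<bar> then x else 0) \<partial>P)"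
    using mean0 by simp
  have "\<bar>\<integral>x. (if T < \<bar>x\<bar> then x else 0) \<partial>P\<bar> \<le> (\<integral>x. \<bar>if T < \<bar>x\<bar> then x else 0\<bar> \<partial>P)"
    by (rule integral_abs_bound)
  also have "\<dots> \<le> (\<integral>x. T powr (1 - s) * (if T < \<bar>x\<bar> then \<bar>x\<bar> powr s else 0) \<partial>P)"
  proof (rule integral_mono)
    show "integrable P (\<lambda>x. \<bar>if T < \<bar>x\<bar> then x else 0\<bar>)" using i2 by simp
    show "integrable P (\<lambda>x. T powr (1 - s) * (if T < \<bar>x\<bar> then \<bar>x\<bar> powr s else 0))"
      by (intro integrable_mult_right int_tailf)
    fix x :: real
    show "\<bar>if T < \<bar>x\<bar> then x else 0\<bar> \<le> T powr (1 - s) * (if T < \<bar>x\<bar> then \<bar>x\<bar> powr s else 0)"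
    proof (cases "T < \<bar>x\<bar>")
      case True
      have "T powr (s - 1) \<le> \<bar>x\<bar> powr (s - 1)" using True T s1 by (intro powr_mono2) auto
      then have "\<bar>x\<bar> * T powr (s - 1) \<le> \<bar>x\<bar> * \<bar>x\<bar> powr (s - 1)" by (simp add: mult_left_mono)
      also have "\<bar>x\<bar> * \<bar>x\<bar> powr (s - 1) = \<bar>x\<bar> powr s"
        using True T by (simp add: powr_diff)
      finally have "\<bar>x\<bar> \<le> \<bar>x\<bar> powr s / T powr (s - 1)" using T by (simp add: divide_simps)
      also have "\<dots> = T powr (1 - s) * \<bar>x\<bar> powr s"
        using T by (simp add: powr_diff divide_simps)
      finally show ?thesis using True by simp
    qed auto
  qed
  also have "\<dots> = T powr (1 - s) * tau P s T" unfolding tau_def by simp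
  finally show ?thesis using eq by simp
qed

lemma trunc_var:
  assumes T: "T > 0"
  shows "(\<integral>x. (if \<bar>x\<bar> \<le> T then x else 0)\<^sup>2 \<partial>P) \<le> T powr (2 - s) * 2"
proof -
  have "(\<integral>x. (if \<bar>x\<bar> \<le> T then x else 0)\<^sup>2 \<partial>P) \<le> (\<integral>x. T powr (2 - s) * \<bar>x\<bar> powr s \<partial>P)"
  proof (rule integral_mono)
    show "integrable P (\<lambda>x. (if \<bar>x\<bar> \<le> T then x else 0)\<^sup>2)"
      by (rule measure_pmf.integrable_const_bound[where B="T\<^sup>2"] | rule integrable_const_bound[where B="T\<^sup>2"])
         (auto simp: mP abs_le_square_iff[symmetric] intro!: power_mono)
    show "integrable P (\<lambda>x. T powr (2 - s) * \<bar>x\<bar> powr s)"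
      by (intro integrable_mult_right int_mom)
    fix x :: real
    show "(if \<bar>x\<bar> \<le> T then x else 0)\<^sup>2 \<le> T powr (2 - s) * \<bar>x\<bar> powr s"
    proof (cases "\<bar>x\<bar> \<le> T \<and> x \<noteq> 0")
      case True
      have "\<bar>x\<bar> powr (2 - s) \<le> T powr (2 - s)" using True s2 by (intro powr_mono2) auto
      then have "\<bar>x\<bar> powr (2 - s) * \<bar>x\<bar> powr s \<le> T powr (2 - s) * \<bar>x\<bar> powr s"
        by (simp add: mult_right_mono)
      moreover have "\<bar>x\<bar> powr (2 - s) * \<bar>x\<bar> powr s = x\<^sup>2"
        using True by (simp add: powr_add[symmetric] powr_numeral)
      ultimately show ?thesis using True by simp
    qed auto
  qed
  also have "\<dots> = T powr (2 - s) * (\<integral>x. \<bar>x\<bar> powr s \<partial>P)" by simp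
  also have "\<dots> \<le> T powr (2 - s) * 2" by (intro mult_left_mono int_mom_le) auto
  finally show ?thesis .
qed


lemma key_xi:
  fixes u :: "nat \<Rightarrow> real" and R B T :: real
  assumes R: "R > 0" and B: "B > 0" and T: "T > 0" and uR: "(\<Sum>j<n. (u j)\<^sup>2) \<le> R"
    and cond: "real n * (T powr (1 - s) * tau P s T)\<^sup>2 \<le> R * B\<^sup>2 / 4"
  shows "measure (PiM {..<n} (\<lambda>_. P)) {y \<in> space (PiM {..<n} (\<lambda>_. P)). B * R < \<bar>\<Sum>j<n. u j * y j\<bar>}
    \<le> real n * (T powr (-s) * tau P s T) + 4 * (T powr (2 - s) * 2) / (B\<^sup>2 * R)"
proof -
  have pps: "product_prob_space (\<lambda>_. P)"
    by (simp add: product_prob_space_def product_sigma_finite_def product_prob_space_axioms_def P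
        prob_space_imp_sigma_finite)
  let ?Q = "PiM {..<n} (\<lambda>_. P)"
  define h where "h = (\<lambda>x::real. if \<bar>x\<bar> \<le> T then x else 0)"
  define m where "m = expectation h"
  define g where "g = (\<lambda>x. h x - m)"
  have hm: "h \<in> borel_measurable P" unfolding mP h_def by measurable
  have gm: "g \<in> borel_measurable P" unfolding mP g_def h_def by measurable
  have hb: "\<bar>h x\<bar> \<le> T" for x using T by (simp add: h_def)
  have gb: "\<bar>g x\<bar> \<le> T + \<bar>m\<bar>" for x using hb[of x] by (simp add: g_def)
  have ih: "integrable P h" using hm hb by (intro integrable_const_bound[where B=T]) auto
  have sqh: "(h x)\<^sup>2 \<le> T\<^sup>2" for x using power_mono[OF hb[of x] abs_ge_zero, of 2] by simp
  have ih2: "integrable P (\<lambda>x. (h x)\<^sup>2)"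
    using hm sqh by (intro integrable_const_bound[where B="T\<^sup>2"]) auto
  have Eg: "expectation g = 0" unfolding g_def m_def using ih by (simp add: measure_def emeasure_space_1)
  have "expectation (\<lambda>x. (g x)\<^sup>2) = variance h"
    unfolding g_def m_def by simp
  also have "\<dots> = expectation (\<lambda>x. (h x)\<^sup>2) - (expectation h)\<^sup>2"
    by (rule variance_eq[OF ih ih2])
  also have "\<dots> \<le> expectation (\<lambda>x. (h x)\<^sup>2)" by simp
  also have "\<dots> \<le> T powr (2 - s) * 2" unfolding h_def by (rule trunc_var[OF T])
  finally have Vg: "expectation (\<lambda>x. (g x)\<^sup>2) \<le> T powr (2 - s) * 2" .
  have mb: "\<bar>m\<bar> \<le> T powr (1 - s) * tau P s T" unfolding m_def h_def by (rule tail_mean[OF T])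
  have compm: "(\<lambda>y. y j) \<in> borel_measurable ?Q" if "j \<in> {..<n}" for j
    using measurable_component_singleton[OF that, of "\<lambda>_. P"] measurable_cong_sets[OF refl sP, of ?Q] by simp
  have msum: "\<bar>m * (\<Sum>j<n. u j)\<bar> \<le> B * R / 2"
  proof -
    have cs: "(\<Sum>j<n. u j)\<^sup>2 \<le> (\<Sum>j<n. (u j)\<^sup>2) * real n"
      using Cauchy_Schwarz_ineq_sum[of u "\<lambda>_. 1" "{..<n}"] by simp
    have cs2: "(\<Sum>j<n. u j)\<^sup>2 \<le> R * real n"
      using order_trans[OF cs mult_right_mono[OF uR]] by simp
    have mn: "real n * m\<^sup>2 \<le> real n * (T powr (1 - s) * tau P s T)\<^sup>2"
      using power_mono[OF mb abs_ge_zero, of 2] by (intro mult_left_mono) auto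
    have "(m * (\<Sum>j<n. u j))\<^sup>2 = m\<^sup>2 * (\<Sum>j<n. u j)\<^sup>2" by (simp add: power_mult_distrib)
    also have "\<dots> \<le> m\<^sup>2 * (R * real n)"
      using cs2 by (intro mult_left_mono) auto
    also have "\<dots> = R * (real n * m\<^sup>2)" by simp
    also have "\<dots> \<le> R * (R * B\<^sup>2 / 4)"
      using order_trans[OF mn cond] R by (intro mult_left_mono) auto
    also have "\<dots> = (B * R / 2)\<^sup>2" by (simp add: power2_eq_square)
    finally have "\<bar>m * (\<Sum>j<n. u j)\<bar>\<^sup>2 \<le> (B * R / 2)\<^sup>2" by simp
    then show ?thesis by (rule power2_le_imp_le) (use B R in simp)
  qed
  define E1 where "E1 = (\<Union>j\<in>{..<n}. {y \<in> space ?Q. T < \<bar>y j\<bar>})"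
  define E2 where "E2 = {y \<in> space ?Q. B * R / 2 \<le> \<bar>\<Sum>j\<in>{..<n}. u j * g (y j)\<bar>}"
  have sub: "{y \<in> space ?Q. B * R < \<bar>\<Sum>j<n. u j * y j\<bar>} \<subseteq> E1 \<union> E2"
  proof
    fix y assume y: "y \<in> {y \<in> space ?Q. B * R < \<bar>\<Sum>j<n. u j * y j\<bar>}"
    show "y \<in> E1 \<union> E2"
    proof (cases "\<exists>j<n. T < \<bar>y j\<bar>")
      case True then show ?thesis using y unfolding E1_def by auto
    next
      case False
      then have "(\<Sum>j<n. u j * y j) = (\<Sum>j<n. u j * g (y j) + m * u j)"
      proof (intro sum.cong refl)
        fix j assume "j \<in> {..<n}"
        with False have "\<bar>y j\<bar> \<le> T" by auto
        then show "u j * y j = u j * g (y j) + m * u j" by (simp add: g_def h_def algebra_simps)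
      qed
      also have "\<dots> = (\<Sum>j<n. u j * g (y j)) + m * (\<Sum>j<n. u j)"
        by (simp add: sum.distrib sum_distrib_left)
      finally have "(\<Sum>j<n. u j * y j) = (\<Sum>j<n. u j * g (y j)) + m * (\<Sum>j<n. u j)" .
      then have "B * R / 2 \<le> \<bar>\<Sum>j<n. u j * g (y j)\<bar>" using y msum by auto
      then show ?thesis using y unfolding E2_def by auto
    qed
  qed
  have gmQ: "(\<lambda>y. g (y j)) \<in> borel_measurable ?Q" if "j \<in> {..<n}" for j
    by (rule measurable_compose[OF measurable_component_singleton[OF that] gm])
  have E1js: "{y \<in> space ?Q. T < \<bar>y j\<bar>} \<in> sets ?Q" if j: "j \<in> {..<n}" for j
  proof -
    have bs: "{x::real. T < \<bar>x\<bar>} \<in> sets borel" by measurable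
    have "(\<lambda>y. y j) -` {x. T < \<bar>x\<bar>} \<inter> space ?Q \<in> sets ?Q"
      by (rule measurable_sets[OF compm[OF j] bs])
    moreover have "(\<lambda>y. y j) -` {x. T < \<bar>x\<bar>} \<inter> space ?Q = {y \<in> space ?Q. T < \<bar>y j\<bar>}" by auto
    ultimately show ?thesis by simp
  qed
  have E1s: "E1 \<in> sets ?Q" unfolding E1_def using E1js by (intro sets.finite_UN) auto
  have E2s: "E2 \<in> sets ?Q" unfolding E2_def
  proof -
    have "(\<lambda>y. \<bar>\<Sum>j\<in>{..<n}. u j * g (y j)\<bar>) \<in> borel_measurable ?Q"
      by (intro borel_measurable_abs borel_measurable_sum borel_measurable_times borel_measurable_const gmQ)
    moreover have bs: "{x::real. B * R / 2 \<le> x} \<in> sets borel" by measurable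
    ultimately have "(\<lambda>y. \<bar>\<Sum>j\<in>{..<n}. u j * g (y j)\<bar>) -` {x. B * R / 2 \<le> x} \<inter> space ?Q \<in> sets ?Q"
      by (rule measurable_sets)
    moreover have "(\<lambda>y. \<bar>\<Sum>j\<in>{..<n}. u j * g (y j)\<bar>) -` {x. B * R / 2 \<le> x} \<inter> space ?Q
        = {y \<in> space ?Q. B * R / 2 \<le> \<bar>\<Sum>j\<in>{..<n}. u j * g (y j)\<bar>}" by auto
    ultimately show "{y \<in> space ?Q. B * R / 2 \<le> \<bar>\<Sum>j\<in>{..<n}. u j * g (y j)\<bar>} \<in> sets ?Q"
      by simp
  qed
  have "measure ?Q {y \<in> space ?Q. B * R < \<bar>\<Sum>j<n. u j * y j\<bar>} \<le> measure ?Q (E1 \<union> E2)"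
  proof -
    have fQ: "finite_measure ?Q" using prob_space_PiM[of "{..<n}" "\<lambda>_. P"] P by (simp add: prob_space_def)
    show ?thesis using sub E2s E1s by (intro finite_measure.finite_measure_mono[OF fQ]) auto
  qed
  also have "\<dots> \<le> measure ?Q E1 + measure ?Q E2"
    using E1s E2s by (rule measure_Un_le)
  also have "measure ?Q E1 \<le> (\<Sum>j\<in>{..<n}. measure ?Q {y \<in> space ?Q. T < \<bar>y j\<bar>})"
    unfolding E1_def using E1js by (intro measure_UNION_le) auto
  also have "\<dots> = (\<Sum>j\<in>{..<n}. measure P {x. T < \<bar>x\<bar>})"
  proof (intro sum.cong refl)
    fix j assume j: "j \<in> {..<n}"
    have "emeasure ?Q {y \<in> space ?Q. y j \<in> {x. T < \<bar>x\<bar>}} = emeasure P {x. T < \<bar>x\<bar>}"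
      by (rule product_prob_space.emeasure_PiM_Collect_single[OF pps j]) (rule sets_P, measurable)
    then show "measure ?Q {y \<in> space ?Q. T < \<bar>y j\<bar>} = measure P {x. T < \<bar>x\<bar>}"
      by (simp add: measure_def)
  qed
  also have "\<dots> \<le> real n * (T powr (-s) * tau P s T)"
    using tail_prob[OF T] by (simp add: mult_left_mono)
  also have "measure ?Q E2 \<le> (\<Sum>j\<in>{..<n}. (u j)\<^sup>2) * (T powr (2 - s) * 2) / (B * R / 2)\<^sup>2"
    unfolding E2_def
    by (rule cheb_pi[OF P _ gm gb Eg Vg]) (use B R in auto)
  also have "\<dots> \<le> R * (T powr (2 - s) * 2) / (B * R / 2)\<^sup>2"
    using uR by (intro divide_right_mono mult_right_mono) auto
  also have "\<dots> = 4 * (T powr (2 - s) * 2) / (B\<^sup>2 * R)"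
    using R B by (simp add: power2_eq_square field_simps)
  finally show ?thesis by simp
qed

end




lemma nondeg:
  assumes "P \<in> Dclass s"
  shows "\<exists>a>0. measure P {x. a \<le> \<bar>x\<bar>} > 0"
proof (rule ccontr)
  assume H: "\<not> ?thesis"
  have P: "prob_space P" and sP: "sets P = sets borel"
    and one: "1 \<le> (\<integral>\<^sup>+ x. ennreal (\<bar>x\<bar> powr s) \<partial>P)"
    using assms by (auto simp: Dclass_def)
  interpret prob_space P by (rule P)
  have null: "{x. 1 / real (Suc k) \<le> \<bar>x\<bar>} \<in> null_sets P" for k
  proof -
    have sets: "{x. 1 / real (Suc k) \<le> \<bar>x\<bar>} \<in> sets P" unfolding sP by measurable
    have "measure P {x. 1 / real (Suc k) \<le> \<bar>x\<bar>} = 0"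
      using H measure_nonneg[of P "{x. 1 / real (Suc k) \<le> \<bar>x\<bar>}"]
      by (metis less_eq_real_def of_nat_0_less_iff zero_less_Suc zero_less_divide_1_iff)
    then show ?thesis using sets by (simp add: null_sets_def emeasure_eq_measure)
  qed
  have N: "(\<Union>k. {x. 1 / real (Suc k) \<le> \<bar>x\<bar>}) \<in> null_sets P"
    using null by (intro null_sets_UN) auto
  have AE0: "AE x in P. x = 0"
  proof (rule AE_I'[OF N])
    show "{x \<in> space P. \<not> x = 0} \<subseteq> (\<Union>k. {x. 1 / real (Suc k) \<le> \<bar>x\<bar>})"
    proof
      fix x assume "x \<in> {x \<in> space P. \<not> x = 0}"
      then have "0 < \<bar>x\<bar>" by auto
      then obtain k where "inverse (real (Suc k)) < \<bar>x\<bar>" using reals_Archimedean by blast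
      then have "1 / real (Suc k) \<le> \<bar>x\<bar>" by (simp add: inverse_eq_divide)
      then show "x \<in> (\<Union>k. {x. 1 / real (Suc k) \<le> \<bar>x\<bar>})" by blast
    qed
  qed
  have "(\<integral>\<^sup>+ x. ennreal (\<bar>x\<bar> powr s) \<partial>P) = (\<integral>\<^sup>+ x. 0 \<partial>P)"
    by (rule nn_integral_cong_AE) (use AE0 in auto)
  then show False using one by simp
qed

lemma cs_sqrt:
  fixes a b :: "nat \<Rightarrow> real"
  shows "(\<Sum>i<n. a i * b i) \<le> sqrt (\<Sum>i<n. (a i)\<^sup>2) * sqrt (\<Sum>i<n. (b i)\<^sup>2)"
proof -
  have "(\<Sum>i<n. a i * b i) \<le> sqrt ((\<Sum>i<n. a i * b i)\<^sup>2)" by simp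
  also have "\<dots> \<le> sqrt ((\<Sum>i<n. (a i)\<^sup>2) * (\<Sum>i<n. (b i)\<^sup>2))"
    by (rule real_sqrt_le_mono[OF Cauchy_Schwarz_ineq_sum])
  also have "\<dots> = sqrt (\<Sum>i<n. (a i)\<^sup>2) * sqrt (\<Sum>i<n. (b i)\<^sup>2)" by (rule real_sqrt_mult)
  finally show ?thesis .
qed

lemma transpose_bound:
  assumes A: "opnorm_le1 n A"
  shows "(\<Sum>j<n. (\<Sum>i<n. w i * A i j)\<^sup>2) \<le> (\<Sum>i<n. (w i)\<^sup>2)"
proof -
  define u where "u = (\<lambda>j. \<Sum>i<n. w i * A i j)"
  have "(\<Sum>j<n. (u j)\<^sup>2) = (\<Sum>j<n. u j * (\<Sum>i<n. w i * A i j))"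
    by (simp add: u_def power2_eq_square)
  also have "\<dots> = (\<Sum>j<n. \<Sum>i<n. w i * (A i j * u j))"
    by (simp add: sum_distrib_left mult_ac)
  also have "\<dots> = (\<Sum>i<n. \<Sum>j<n. w i * (A i j * u j))"
    by (rule sum.swap)
  also have "\<dots> = (\<Sum>i<n. w i * mvec n A u i)"
    by (simp add: mvec_def sum_distrib_left)
  also have "\<dots> \<le> vnorm n w * vnorm n (mvec n A u)"
    unfolding vnorm_def by (rule cs_sqrt)
  also have "\<dots> \<le> vnorm n w * vnorm n u"
    using A unfolding opnorm_le1_def by (intro mult_left_mono) (auto simp: vnorm_def intro!: sum_nonneg)
  finally have *: "(vnorm n u)\<^sup>2 \<le> vnorm n w * vnorm n u"
    by (simp add: vnorm_def sum_nonneg)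
  have "vnorm n u \<le> vnorm n w"
  proof (cases "vnorm n u = 0")
    case True then show ?thesis by (simp add: vnorm_def sum_nonneg)
  next
    case False
    have nn: "0 \<le> (\<Sum>j<n. (u j)\<^sup>2)" by (intro sum_nonneg) auto
    have "0 \<le> vnorm n u" by (simp add: vnorm_def nn)
    then have "vnorm n u > 0" using False by linarith
    then show ?thesis using * by (simp add: power2_eq_square)
  qed
  moreover have nnu: "0 \<le> (\<Sum>j<n. (u j)\<^sup>2)" by (intro sum_nonneg) auto
  moreover have nnw: "0 \<le> (\<Sum>j<n. (w j)\<^sup>2)" by (intro sum_nonneg) auto
  ultimately have "(vnorm n u)\<^sup>2 \<le> (vnorm n w)\<^sup>2"
    by (intro power_mono) (simp_all add: vnorm_def)
  then have "(\<Sum>j<n. (u j)\<^sup>2) \<le> (\<Sum>i<n. (w i)\<^sup>2)" using nnu nnw by (simp add: vnorm_def)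
  then show ?thesis by (simp add: u_def)
qed

lemma num_eq:
  "(\<Sum>i<n. w i * mvec n A y i) = (\<Sum>j<n. (\<Sum>i<n. w i * A i j) * y j)"
proof -
  have "(\<Sum>i<n. w i * mvec n A y i) = (\<Sum>i<n. \<Sum>j<n. w i * A i j * y j)"
    by (simp add: mvec_def sum_distrib_left mult_ac)
  also have "\<dots> = (\<Sum>j<n. \<Sum>i<n. w i * A i j * y j)"
    by (rule sum.swap)
  also have "\<dots> = (\<Sum>j<n. (\<Sum>i<n. w i * A i j) * y j)"
    by (simp add: sum_distrib_right)
  finally show ?thesis .
qed


lemma w_lower:
  assumes D: "Pw \<in> Dclass s"
  shows "\<exists>c>0. (\<lambda>n. measure (PiM {..<n} (\<lambda>_. Pw))
      {w \<in> space (PiM {..<n} (\<lambda>_. Pw)). (\<Sum>i<n. (w i)\<^sup>2) < c * real n}) \<longlonglongrightarrow> 0"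
proof -
  obtain a where a: "a > 0" and p: "measure Pw {x. a \<le> \<bar>x\<bar>} > 0" using nondeg[OF D] by blast
  have P: "prob_space Pw" and sP: "sets Pw = sets borel" using D by (auto simp: Dclass_def)
  interpret prob_space Pw by (rule P)
  define p where "p = measure Pw {x. a \<le> \<bar>x\<bar>}"
  have p0: "p > 0" using p by (simp add: p_def)
  have p1: "p \<le> 1" unfolding p_def by (rule prob_le_1)
  define g where "g = (\<lambda>x. indicator {x. a \<le> \<bar>x\<bar>} x - p)"
  have As: "{x. a \<le> \<bar>x\<bar>} \<in> sets Pw" unfolding sP by measurable
  have gm: "g \<in> borel_measurable Pw"
    unfolding g_def using As by (intro borel_measurable_diff borel_measurable_indicator) auto
  have gb: "\<bar>g x\<bar> \<le> 1" for x using p0 p1 by (auto simp: g_def indicator_def)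
  have Eg: "integral\<^sup>L Pw g = 0"
  proof -
    have "integral\<^sup>L Pw g = integral\<^sup>L Pw (indicator {x. a \<le> \<bar>x\<bar>}) - integral\<^sup>L Pw (\<lambda>_. p)"
      unfolding g_def using As
      by (intro Bochner_Integration.integral_diff integrable_real_indicator) (auto simp: emeasure_eq_measure)
    also have "\<dots> = 0" using As by (simp add: p_def measure_def emeasure_space_1)
    finally show ?thesis .
  qed
  have Vg: "integral\<^sup>L Pw (\<lambda>x. (g x)\<^sup>2) \<le> 1"
  proof -
    have sq: "(g x)\<^sup>2 \<le> 1" for x using power_mono[OF gb[of x] abs_ge_zero, of 2] by simp
    have "integral\<^sup>L Pw (\<lambda>x. (g x)\<^sup>2) \<le> integral\<^sup>L Pw (\<lambda>x. 1)"
      using gm sq by (intro integral_mono integrable_const_bound[where B=1]) auto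
    also have "\<dots> = 1" by (simp add: measure_def emeasure_space_1)
    finally show ?thesis .
  qed
  define c where "c = a\<^sup>2 * p / 2"
  have c0: "c > 0" using a p0 by (simp add: c_def)
  have bound: "measure (PiM {..<n} (\<lambda>_. Pw)) {w \<in> space (PiM {..<n} (\<lambda>_. Pw)). (\<Sum>i<n. (w i)\<^sup>2) < c * real n}
      \<le> 4 / p\<^sup>2 / real n" if n: "n > 0" for n
  proof -
    let ?Q = "PiM {..<n} (\<lambda>_. Pw)"
    interpret Q: prob_space ?Q by (rule prob_space_PiM) (use P in auto)
    have gmQ[measurable]: "(\<lambda>y. g (y j)) \<in> borel_measurable ?Q" if "j \<in> {..<n}" for j
      by (rule measurable_compose[OF measurable_component_singleton[OF that] gm])
    have L: "real n * p / 2 > 0" using n p0 by simp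
    have sub: "{w \<in> space ?Q. (\<Sum>i<n. (w i)\<^sup>2) < c * real n}
        \<subseteq> {w \<in> space ?Q. real n * p / 2 \<le> \<bar>\<Sum>j\<in>{..<n}. 1 * g (w j)\<bar>}"
    proof safe
      fix w assume w: "w \<in> space ?Q" and lt: "(\<Sum>i<n. (w i)\<^sup>2) < c * real n"
      have "a\<^sup>2 * (\<Sum>i<n. indicator {x. a \<le> \<bar>x\<bar>} (w i)) \<le> (\<Sum>i<n. (w i)\<^sup>2)"
        unfolding sum_distrib_left
      proof (intro sum_mono)
        fix i
        show "a\<^sup>2 * indicator {x. a \<le> \<bar>x\<bar>} (w i) \<le> (w i)\<^sup>2"
        proof (cases "a \<le> \<bar>w i\<bar>")
          case True
          then have "a\<^sup>2 \<le> \<bar>w i\<bar>\<^sup>2" using a by (intro power_mono) auto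
          then show ?thesis using True by simp
        qed auto
      qed
      then have "a\<^sup>2 * (\<Sum>i<n. indicator {x. a \<le> \<bar>x\<bar>} (w i)) < a\<^sup>2 * (real n * p / 2)"
        using lt by (simp add: c_def mult_ac)
      then have "(\<Sum>i<n. indicator {x. a \<le> \<bar>x\<bar>} (w i)) < real n * p / 2"
        using a by simp
      moreover have "(\<Sum>j\<in>{..<n}. 1 * g (w j)) = (\<Sum>i<n. indicator {x. a \<le> \<bar>x\<bar>} (w i)) - real n * p"
        by (simp add: g_def sum_subtractf)
      ultimately show "real n * p / 2 \<le> \<bar>\<Sum>j\<in>{..<n}. 1 * g (w j)\<bar>" by linarith
    qed
    have "measure ?Q {w \<in> space ?Q. (\<Sum>i<n. (w i)\<^sup>2) < c * real n}
        \<le> measure ?Q {w \<in> space ?Q. real n * p / 2 \<le> \<bar>\<Sum>j\<in>{..<n}. 1 * g (w j)\<bar>}"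
      by (rule Q.finite_measure_mono[OF sub]) measurable
    also have "\<dots> \<le> (\<Sum>j\<in>{..<n}. (1::real)\<^sup>2) * 1 / (real n * p / 2)\<^sup>2"
      by (rule cheb_pi[OF P _ gm gb Eg Vg L]) simp
    also have "\<dots> = 4 / p\<^sup>2 / real n"
      using n p0 by (simp add: power2_eq_square field_simps)
    finally show ?thesis .
  qed
  have "(\<lambda>n. measure (PiM {..<n} (\<lambda>_. Pw))
      {w \<in> space (PiM {..<n} (\<lambda>_. Pw)). (\<Sum>i<n. (w i)\<^sup>2) < c * real n}) \<longlonglongrightarrow> 0"
  proof (rule tendsto_sandwich[of "\<lambda>_. 0" _ _ "\<lambda>n. 4 / p\<^sup>2 / real n"])
    show "\<forall>\<^sub>F n in sequentially. 0 \<le> measure (PiM {..<n} (\<lambda>_. Pw))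
      {w \<in> space (PiM {..<n} (\<lambda>_. Pw)). (\<Sum>i<n. (w i)\<^sup>2) < c * real n}" by simp
    show "\<forall>\<^sub>F n in sequentially. measure (PiM {..<n} (\<lambda>_. Pw))
      {w \<in> space (PiM {..<n} (\<lambda>_. Pw)). (\<Sum>i<n. (w i)\<^sup>2) < c * real n} \<le> 4 / p\<^sup>2 / real n"
      using eventually_gt_at_top[of 0] by eventually_elim (rule bound)
    show "(\<lambda>n. 4 / p\<^sup>2 / real n) \<longlonglongrightarrow> 0" by (rule lim_const_over_n)
  qed simp
  then show ?thesis using c0 by blast
qed




lemma alg1:
  fixes \<beta> n \<eta> t :: real
  assumes "\<beta> > 0" "n > 0" "\<eta> > 0"
  shows "n * (\<eta> * \<beta> * n) powr (-(1+t)) = \<eta> powr (-(1+t)) / (\<beta> powr (1+t) * n powr t)"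
proof -
  have e: "(\<eta> * \<beta> * n) powr (-(1+t)) = inverse ((\<eta> * \<beta> * n) powr (1+t))" by (rule powr_minus)
  have f: "(\<eta> * \<beta> * n) powr (1+t) = \<eta> powr (1+t) * \<beta> powr (1+t) * (n * n powr t)"
    using assms by (simp add: powr_mult powr_add)
  have g: "\<eta> powr (-(1+t)) = inverse (\<eta> powr (1+t))" by (rule powr_minus)
  show ?thesis unfolding e f g using assms by (simp add: field_simps)
qed

lemma alg2:
  fixes \<beta> n \<eta> t :: real
  assumes "\<beta> > 0" "n > 0" "\<eta> > 0"
  shows "(\<eta> * \<beta> * n) powr (1 - t) / (\<beta>\<^sup>2 * n) = \<eta> powr (1 - t) / (\<beta> powr (1+t) * n powr t)"
  using assms by (simp add: powr_mult powr_diff powr_add field_simps power2_eq_square)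

lemma alg3:
  fixes \<beta> n \<eta> t :: real
  assumes "\<beta> > 0" "n > 0" "\<eta> > 0"
  shows "(\<eta> * \<beta> * n) powr (-t) * (\<eta> powr t * (\<beta> powr (1+t) * n powr t)) = \<beta>"
  using assms by (simp add: powr_mult powr_minus powr_add field_simps)


lemma ratio_imp:
  assumes ev: "ratio_event n A b \<delta> w y" and b: "b \<noteq> 0" and R: "(\<Sum>i<n. (w i)\<^sup>2) > 0" and d: "\<delta> > 0"
  shows "\<delta> * \<bar>b\<bar> * (\<Sum>i<n. (w i)\<^sup>2) < \<bar>\<Sum>j<n. (\<Sum>i<n. w i * A i j) * y j\<bar>"
proof -
  define R where "R = (\<Sum>i<n. (w i)\<^sup>2)"
  define num where "num = \<bar>\<Sum>i<n. w i * mvec n A y i\<bar>"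
  have vn: "(vnorm n w)\<^sup>2 = R" unfolding vnorm_def R_def using R by simp
  have den: "b * R \<noteq> 0" using b R by (simp add: R_def)
  from ev have "num / (b * R) > \<delta>"
    unfolding ratio_event_def Let_def vn num_def using den by simp
  moreover have "num \<ge> 0" by (simp add: num_def)
  ultimately have pos: "b * R > 0"
    using d den by (metis divide_nonneg_neg linorder_neqE_linordered_idom not_le order_less_trans)
  then have "b > 0" using R by (simp add: R_def zero_less_mult_iff)
  from \<open>num / (b * R) > \<delta>\<close> pos have "\<delta> * (b * R) < num" by (simp add: pos_less_divide_eq)
  then show ?thesis using \<open>b > 0\<close> by (simp add: R_def num_def num_eq mult.assoc)
qed

lemma reduce:
  fixes Pw Pxi :: "real measure" and A :: "nat \<Rightarrow> nat \<Rightarrow> real" and b \<delta> c0 G :: real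
  assumes Pw: "prob_space Pw" and sPw: "sets Pw = sets borel"
    and Px: "prob_space Pxi" and sPx: "sets Pxi = sets borel"
    and A: "opnorm_le1 n A" and b: "b \<noteq> 0" and n: "n > 0" and d: "\<delta> > 0" and c0: "c0 > 0"
    and G: "G \<ge> 0"
    and H: "\<And>u R. c0 * real n \<le> R \<Longrightarrow> (\<Sum>j<n. (u j)\<^sup>2) \<le> R \<Longrightarrow>
        measure (PiM {..<n} (\<lambda>_. Pxi)) {y \<in> space (PiM {..<n} (\<lambda>_. Pxi)). \<delta> * \<bar>b\<bar> * R < \<bar>\<Sum>j<n. u j * y j\<bar>} \<le> G"
  shows "measure (PiM {..<n} (\<lambda>_. Pw) \<Otimes>\<^sub>M PiM {..<n} (\<lambda>_. Pxi))
            {p \<in> space (PiM {..<n} (\<lambda>_. Pw) \<Otimes>\<^sub>M PiM {..<n} (\<lambda>_. Pxi)).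
               ratio_event n A b \<delta> (fst p) (snd p)}
         \<le> measure (PiM {..<n} (\<lambda>_. Pw)) {w \<in> space (PiM {..<n} (\<lambda>_. Pw)). (\<Sum>i<n. (w i)\<^sup>2) < c0 * real n} + G"
proof -
  let ?W = "PiM {..<n} (\<lambda>_. Pw)" and ?X = "PiM {..<n} (\<lambda>_. Pxi)"
  let ?O = "?W \<Otimes>\<^sub>M ?X"
  have pW: "prob_space ?W" by (rule prob_space_PiM) (use Pw in auto)
  have pX: "prob_space ?X" by (rule prob_space_PiM) (use Px in auto)
  have pO: "prob_space ?O" by (rule prob_space_pair[OF pW pX])
  have fO: "finite_measure ?O" using pO by (simp add: prob_space_def)
  interpret W: prob_space ?W by (rule pW)
  interpret X: prob_space ?X by (rule pX)
  define E where "E = {p \<in> space ?O. ratio_event n A b \<delta> (fst p) (snd p)}"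
  define Bad where "Bad = {w \<in> space ?W. (\<Sum>i<n. (w i)\<^sup>2) < c0 * real n}"
  have cW: "(\<lambda>w. w i) \<in> borel_measurable ?W" if "i \<in> {..<n}" for i
    using measurable_component_singleton[OF that, of "\<lambda>_. Pw"] measurable_cong_sets[OF refl sPw, of ?W] by simp
  have cX: "(\<lambda>w. w i) \<in> borel_measurable ?X" if "i \<in> {..<n}" for i
    using measurable_component_singleton[OF that, of "\<lambda>_. Pxi"] measurable_cong_sets[OF refl sPx, of ?X] by simp
  have fm: "(\<lambda>p. fst p i) \<in> borel_measurable ?O" if "i \<in> {..<n}" for i
    by (rule measurable_compose[OF measurable_fst cW[OF that]])
  have sm: "(\<lambda>p. snd p i) \<in> borel_measurable ?O" if "i \<in> {..<n}" for i
    by (rule measurable_compose[OF measurable_snd cX[OF that]])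
  define F where "F = (\<lambda>p. \<bar>\<Sum>i\<in>{..<n}. fst p i * (\<Sum>j\<in>{..<n}. A i j * snd p j)\<bar>)"
  define D where "D = (\<lambda>p::(nat \<Rightarrow> real) \<times> (nat \<Rightarrow> real). b * (\<Sum>i\<in>{..<n}. (fst p i)\<^sup>2))"
  have Fm: "F \<in> borel_measurable ?O" unfolding F_def
    by (intro borel_measurable_abs borel_measurable_sum borel_measurable_times borel_measurable_const fm sm)
  have Dm: "D \<in> borel_measurable ?O" unfolding D_def
    by (intro borel_measurable_times borel_measurable_const borel_measurable_power
        borel_measurable_sum fm)
  have E_eq: "E = {p \<in> space ?O. D p = 0} \<union> {p \<in> space ?O. \<delta> < F p / D p}"
    unfolding E_def ratio_event_def Let_def vnorm_def mvec_def F_def D_def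
    by (auto simp: real_sqrt_pow2 sum_nonneg)
  have Es: "E \<in> sets ?O"
  proof -
    have "{p \<in> space ?O. D p = 0} \<in> sets ?O" using Dm by measurable
    moreover have "(\<lambda>p. F p / D p) \<in> borel_measurable ?O" using Fm Dm by (rule borel_measurable_divide)
    then have "{p \<in> space ?O. \<delta> < F p / D p} \<in> sets ?O" by measurable
    ultimately show ?thesis unfolding E_eq by blast
  qed
  have Bads: "Bad \<in> sets ?W"
  proof -
    have "(\<lambda>w. \<Sum>i\<in>{..<n}. (w i)\<^sup>2) \<in> borel_measurable ?W"
      by (intro borel_measurable_sum borel_measurable_power cW)
    then show ?thesis unfolding Bad_def by measurable
  qed
  have pt: "emeasure ?X (Pair w -` E) \<le> indicator Bad w + ennreal G" if w: "w \<in> space ?W" for w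
  proof (cases "w \<in> Bad")
    case True
    have "emeasure ?X (Pair w -` E) \<le> 1" by (rule X.emeasure_le_1)
    also have "\<dots> \<le> indicator Bad w + ennreal G" using True by simp
    finally show ?thesis .
  next
    case False
    define R where "R = (\<Sum>i<n. (w i)\<^sup>2)"
    define u where "u = (\<lambda>j. \<Sum>i<n. w i * A i j)"
    have Rge: "c0 * real n \<le> R" using False w by (simp add: Bad_def R_def not_less)
    have Rpos: "R > 0" using c0 n Rge by (smt (verit) mult_pos_pos of_nat_0_less_iff)
    have uR: "(\<Sum>j<n. (u j)\<^sup>2) \<le> R" unfolding u_def R_def by (rule transpose_bound[OF A])
    define S where "S = {y \<in> space ?X. \<delta> * \<bar>b\<bar> * R < \<bar>\<Sum>j<n. u j * y j\<bar>}"
    have Ss: "S \<in> sets ?X"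
    proof -
      have "(\<lambda>y. \<bar>\<Sum>j\<in>{..<n}. u j * y j\<bar>) \<in> borel_measurable ?X"
        by (intro borel_measurable_abs borel_measurable_sum borel_measurable_times borel_measurable_const cX)
      then show ?thesis unfolding S_def by measurable
    qed
    have sub: "Pair w -` E \<subseteq> S"
    proof
      fix y assume "y \<in> Pair w -` E"
      then have wy: "(w, y) \<in> space ?O" and ev: "ratio_event n A b \<delta> w y" by (auto simp: E_def)
      from wy have y: "y \<in> space ?X" by (simp add: space_pair_measure)
      have "\<delta> * \<bar>b\<bar> * R < \<bar>\<Sum>j<n. u j * y j\<bar>"
        using ratio_imp[OF ev b _ d] Rpos by (simp add: R_def u_def)
      then show "y \<in> S" using y by (simp add: S_def)
    qed
    have "emeasure ?X (Pair w -` E) \<le> emeasure ?X S" by (rule emeasure_mono[OF sub Ss])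
    also have "\<dots> = ennreal (measure ?X S)" by (rule X.emeasure_eq_measure)
    also have "\<dots> \<le> ennreal G" using H[OF Rge uR] by (simp add: S_def ennreal_leI)
    also have "\<dots> \<le> indicator Bad w + ennreal G" by simp
    finally show ?thesis .
  qed
  have "emeasure ?O E = (\<integral>\<^sup>+ w. emeasure ?X (Pair w -` E) \<partial>?W)"
    by (rule X.emeasure_pair_measure_alt[OF Es])
  also have "\<dots> \<le> (\<integral>\<^sup>+ w. (indicator Bad w + ennreal G) \<partial>?W)"
    by (rule nn_integral_mono) (rule pt)
  also have "\<dots> = (\<integral>\<^sup>+ w. indicator Bad w \<partial>?W) + (\<integral>\<^sup>+ w. ennreal G \<partial>?W)"
    using Bads by (intro nn_integral_add) auto
  also have "\<dots> = emeasure ?W Bad + ennreal G"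
    using Bads by (simp add: W.emeasure_space_1)
  also have "\<dots> = ennreal (measure ?W Bad + G)"
    using G by (simp add: W.emeasure_eq_measure ennreal_plus)
  finally have "ennreal (measure ?O E) \<le> ennreal (measure ?W Bad + G)"
    using finite_measure.emeasure_eq_measure[OF fO] by simp
  then have "measure ?O E \<le> measure ?W Bad + G"
    using G by (subst (asm) ennreal_le_iff) auto
  then show ?thesis unfolding E_def Bad_def .
qed


lemma DclassD:
  assumes "P \<in> Dclass s"
  shows "prob_space P" "sets P = sets borel" "integrable P (\<lambda>x. x)" "(\<integral>x. x \<partial>P) = 0"
    "(\<integral>\<^sup>+ x. ennreal (\<bar>x\<bar> powr s) \<partial>P) \<le> 2"
  using assms unfolding Dclass_def by blast+

lemma crit0:
  fixes f :: "nat \<Rightarrow> real"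
  assumes "\<And>\<epsilon>. \<epsilon> > 0 \<Longrightarrow> eventually (\<lambda>n. f n \<le> \<epsilon>) sequentially" and "\<And>n. 0 \<le> f n"
  shows "f \<longlonglongrightarrow> 0"
proof (rule tendstoI)
  fix e :: real assume e: "e > 0"
  have "eventually (\<lambda>n. f n \<le> e / 2) sequentially" using assms(1)[of "e / 2"] e by simp
  then show "eventually (\<lambda>n. dist (f n) 0 < e) sequentially"
    by eventually_elim (use assms(2) e in auto)
qed

lemma nat_powr_at_top:
  assumes p: "(p::real) > 0"
  shows "filterlim (\<lambda>n::nat. real n powr p) at_top sequentially"
proof -
  have "filterlim (\<lambda>x::real. x powr p) at_top at_top"
  proof (subst filterlim_cong[OF refl refl])
    show "LIM x at_top. exp (p * ln x) :> at_top"
      by (rule filterlim_compose[OF exp_at_top filterlim_tendsto_pos_mult_at_top[OF tendsto_const]])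
         (simp_all add: ln_at_top p)
    show "eventually (\<lambda>x. x powr p = exp (p * ln x)) at_top"
      using eventually_gt_at_top[of 0] by eventually_elim (simp add: powr_def)
  qed
  then show ?thesis by (rule filterlim_compose[OF _ filterlim_real_sequentially])
qed

theorem lemmaA6:
  fixes t \<delta> :: real and M :: "nat \<Rightarrow> nat \<Rightarrow> nat \<Rightarrow> real" and b :: "nat \<Rightarrow> real"
    and Pw Pxi :: "real measure"
  assumes "0 \<le> t" and "t \<le> 1"
    and "\<And>n. opnorm_le1 n (M n)"
    and "t < 1 \<Longrightarrow> \<exists>C>0. \<forall>n. real n powr (- t / (1 + t)) \<le> C * \<bar>b n\<bar>"
    and "t = 1 \<Longrightarrow> (\<forall>\<^sub>F n in sequentially. b n \<noteq> 0) \<and>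
                   (\<lambda>n. real n powr (- 1 / 2) / \<bar>b n\<bar>) \<longlonglongrightarrow> 0"
    and "Pw \<in> Dclass 1 \<union> Dclass 2"
    and "Pxi \<in> Dclass (1 + t)"
    and "\<delta> > 0"
  shows "(\<lambda>n. measure (PiM {..<n} (\<lambda>_. Pw) \<Otimes>\<^sub>M PiM {..<n} (\<lambda>_. Pxi))
            {p \<in> space (PiM {..<n} (\<lambda>_. Pw) \<Otimes>\<^sub>M PiM {..<n} (\<lambda>_. Pxi)).
               ratio_event n (M n) (b n) \<delta> (fst p) (snd p)}) \<longlonglongrightarrow> 0"
proof -
  note t0 = assms(1) and t1 = assms(2) and d = assms(8)
  define s where "s = 1 + t"
  have Pxs: "Pxi \<in> Dclass s" using assms(7) by (simp add: s_def)
  note Px = DclassD(1)[OF Pxs] and sPx = DclassD(2)[OF Pxs]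
  have "momP Pxi s"
  proof (rule momP.intro)
    show "prob_space Pxi" "sets Pxi = sets borel" "integrable Pxi (\<lambda>x. x)" "(\<integral>x. x \<partial>Pxi) = 0"
      "(\<integral>\<^sup>+ x. ennreal (\<bar>x\<bar> powr s) \<partial>Pxi) \<le> 2" by (rule DclassD[OF Pxs])+
    show "1 \<le> s" "s \<le> 2" using t0 t1 by (simp_all add: s_def)
  qed
  interpret X: momP Pxi s by fact
  have Pw1: "Pw \<in> Dclass 1 \<or> Pw \<in> Dclass 2" using assms(6) by simp
  have Pw: "prob_space Pw" using Pw1 DclassD(1) by blast
  have sPw: "sets Pw = sets borel" using Pw1 DclassD(2) by blast
  have "\<exists>c>0. (\<lambda>n. measure (PiM {..<n} (\<lambda>_. Pw))
      {w \<in> space (PiM {..<n} (\<lambda>_. Pw)). (\<Sum>i<n. (w i)\<^sup>2) < c * real n}) \<longlonglongrightarrow> 0"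
  proof (cases "Pw \<in> Dclass 1")
    case True
    then show ?thesis by (rule w_lower)
  next
    case False
    then have "Pw \<in> Dclass 2" using assms(6) by simp
    then show ?thesis by (rule w_lower)
  qed
  then obtain c0 where c0: "c0 > 0" and pw: "(\<lambda>n. measure (PiM {..<n} (\<lambda>_. Pw))
      {w \<in> space (PiM {..<n} (\<lambda>_. Pw)). (\<Sum>i<n. (w i)\<^sup>2) < c0 * real n}) \<longlonglongrightarrow> 0"
    by blast
  define pwn where "pwn n = measure (PiM {..<n} (\<lambda>_. Pw))
      {w \<in> space (PiM {..<n} (\<lambda>_. Pw)). (\<Sum>i<n. (w i)\<^sup>2) < c0 * real n}" for n
  define f where "f n = measure (PiM {..<n} (\<lambda>_. Pw) \<Otimes>\<^sub>M PiM {..<n} (\<lambda>_. Pxi))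
            {p \<in> space (PiM {..<n} (\<lambda>_. Pw) \<Otimes>\<^sub>M PiM {..<n} (\<lambda>_. Pxi)).
               ratio_event n (M n) (b n) \<delta> (fst p) (snd p)}" for n
  define \<kappa> where "\<kappa> n = \<bar>b n\<bar> powr s * real n powr t" for n
  have pwlim: "pwn \<longlonglongrightarrow> 0" using pw by (simp add: pwn_def[abs_def])
  have f0: "0 \<le> f n" for n by (simp add: f_def)
  have step: "f n \<le> pwn n + (\<eta> powr (-s) * tau Pxi s (\<eta> * \<bar>b n\<bar> * real n) / \<kappa> n
                + 8 * \<eta> powr (1 - t) / (\<delta>\<^sup>2 * c0 * \<kappa> n))"
    if n: "n > 0" and bn: "b n \<noteq> 0" and eta: "\<eta> > 0"
      and cond: "tau Pxi s (\<eta> * \<bar>b n\<bar> * real n) \<le> sqrt c0 * \<delta> / 2 * \<eta> powr t * \<kappa> n" for n \<eta>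
  proof -
    define \<beta> where "\<beta> = \<bar>b n\<bar>"
    have \<beta>: "\<beta> > 0" using bn by (simp add: \<beta>_def)
    have nr: "real n > 0" using n by simp
    define T where "T = \<eta> * \<beta> * real n"
    have T: "T > 0" using \<beta> nr eta by (simp add: T_def)
    define \<tau> where "\<tau> = tau Pxi s T"
    have \<tau>0: "0 \<le> \<tau>" unfolding \<tau>_def by (rule X.tau_nonneg)
    have \<kappa>pos: "\<kappa> n > 0" using \<beta> nr by (simp add: \<kappa>_def \<beta>_def[symmetric])
    have \<kappa>eq: "\<kappa> n = \<beta> powr (1 + t) * real n powr t" by (simp add: \<kappa>_def \<beta>_def s_def)
    define G where "G = \<eta> powr (-s) * \<tau> / \<kappa> n + 8 * \<eta> powr (1 - t) / (\<delta>\<^sup>2 * c0 * \<kappa> n)"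
    have G0: "G \<ge> 0" using \<tau>0 \<kappa>pos c0 d by (simp add: G_def)
    have "f n \<le> pwn n + G"
      unfolding f_def pwn_def
    proof (rule reduce[OF Pw sPw Px sPx assms(3) bn n d c0 G0])
      fix u :: "nat \<Rightarrow> real" and R :: real
      assume Rge: "c0 * real n \<le> R" and uR: "(\<Sum>j<n. (u j)\<^sup>2) \<le> R"
      have "c0 * real n > 0" using c0 nr by simp
      then have R: "R > 0" using Rge by linarith
      have B: "\<delta> * \<beta> > 0" using d \<beta> by simp
      have a3: "T powr (-t) * (\<eta> powr t * \<kappa> n) = \<beta>"
        unfolding T_def \<kappa>eq by (rule alg3[OF \<beta> nr eta])
      have c1: "T powr (1 - s) * \<tau> \<le> sqrt c0 * \<delta> * \<beta> / 2"
      proof -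
        have e: "T powr (1 - s) = T powr (-t)" by (simp add: s_def)
        have ct: "\<tau> \<le> sqrt c0 * \<delta> / 2 * \<eta> powr t * \<kappa> n"
          using cond by (simp add: \<tau>_def T_def \<beta>_def)
        have "T powr (-t) * \<tau> \<le> T powr (-t) * (sqrt c0 * \<delta> / 2 * \<eta> powr t * \<kappa> n)"
          by (rule mult_left_mono[OF ct]) simp
        then have "T powr (1 - s) * \<tau> \<le> T powr (-t) * (sqrt c0 * \<delta> / 2 * \<eta> powr t * \<kappa> n)"
          by (simp only: e)
        also have "\<dots> = sqrt c0 * \<delta> / 2 * (T powr (-t) * (\<eta> powr t * \<kappa> n))" by (simp add: mult_ac)
        also have "\<dots> = sqrt c0 * \<delta> * \<beta> / 2" by (simp add: a3)
        finally show ?thesis .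
      qed
      have c2: "(T powr (1 - s) * \<tau>)\<^sup>2 \<le> c0 * (\<delta> * \<beta>)\<^sup>2 / 4"
      proof -
        have "(T powr (1 - s) * \<tau>)\<^sup>2 \<le> (sqrt c0 * \<delta> * \<beta> / 2)\<^sup>2"
          using c1 \<tau>0 by (intro power_mono) auto
        also have "\<dots> = c0 * (\<delta> * \<beta>)\<^sup>2 / 4" using c0 by (simp add: power_mult_distrib power_divide)
        finally show ?thesis .
      qed
      have cond': "real n * (T powr (1 - s) * \<tau>)\<^sup>2 \<le> R * (\<delta> * \<beta>)\<^sup>2 / 4"
      proof -
        have "real n * (T powr (1 - s) * \<tau>)\<^sup>2 \<le> real n * (c0 * (\<delta> * \<beta>)\<^sup>2 / 4)"
          using c2 by (intro mult_left_mono) auto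
        also have "\<dots> = (c0 * real n) * (\<delta> * \<beta>)\<^sup>2 / 4" by simp
        also have "\<dots> \<le> R * (\<delta> * \<beta>)\<^sup>2 / 4" using Rge by (intro divide_right_mono mult_right_mono) auto
        finally show ?thesis .
      qed
      have "measure (PiM {..<n} (\<lambda>_. Pxi)) {y \<in> space (PiM {..<n} (\<lambda>_. Pxi)). \<delta> * \<beta> * R < \<bar>\<Sum>j<n. u j * y j\<bar>}
          \<le> real n * (T powr (-s) * \<tau>) + 4 * (T powr (2 - s) * 2) / ((\<delta> * \<beta>)\<^sup>2 * R)"
        unfolding \<tau>_def by (rule X.key_xi[OF R B T uR cond'[unfolded \<tau>_def]])
      also have "real n * (T powr (-s) * \<tau>) = \<eta> powr (-s) * \<tau> / \<kappa> n"
      proof -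
        have a1: "real n * T powr (-s) = \<eta> powr (-s) / \<kappa> n"
          unfolding T_def \<kappa>eq s_def by (rule alg1[OF \<beta> nr eta])
        have "real n * (T powr (-s) * \<tau>) = (real n * T powr (-s)) * \<tau>" by (simp only: mult.assoc)
        also have "\<dots> = \<eta> powr (-s) / \<kappa> n * \<tau>" by (simp only: a1)
        finally show ?thesis by simp
      qed
      also have "4 * (T powr (2 - s) * 2) / ((\<delta> * \<beta>)\<^sup>2 * R) \<le> 8 * T powr (1 - t) / (\<delta>\<^sup>2 * c0 * (\<beta>\<^sup>2 * real n))"
      proof -
        have "4 * (T powr (2 - s) * 2) / ((\<delta> * \<beta>)\<^sup>2 * R) = 8 * T powr (1 - t) / (\<delta>\<^sup>2 * \<beta>\<^sup>2 * R)"
          by (simp add: s_def power_mult_distrib)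
        also have "\<dots> \<le> 8 * T powr (1 - t) / (\<delta>\<^sup>2 * \<beta>\<^sup>2 * (c0 * real n))"
          using Rge c0 nr d \<beta> R by (intro divide_left_mono mult_left_mono) (auto intro!: mult_pos_pos)
        also have "\<dots> = 8 * T powr (1 - t) / (\<delta>\<^sup>2 * c0 * (\<beta>\<^sup>2 * real n))" by (simp add: mult_ac)
        finally show ?thesis .
      qed
      also have "8 * T powr (1 - t) / (\<delta>\<^sup>2 * c0 * (\<beta>\<^sup>2 * real n)) = 8 * \<eta> powr (1 - t) / (\<delta>\<^sup>2 * c0 * \<kappa> n)"
      proof -
        have h: "T powr (1 - t) / (\<beta>\<^sup>2 * real n) = \<eta> powr (1 - t) / \<kappa> n"
          unfolding T_def \<kappa>eq by (rule alg2[OF \<beta> nr eta])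
        have "8 * T powr (1 - t) / (\<delta>\<^sup>2 * c0 * (\<beta>\<^sup>2 * real n))
            = (8 / (\<delta>\<^sup>2 * c0)) * (T powr (1 - t) / (\<beta>\<^sup>2 * real n))" by (simp only: times_divide_times_eq)
        also have "\<dots> = (8 / (\<delta>\<^sup>2 * c0)) * (\<eta> powr (1 - t) / \<kappa> n)" by (simp only: h)
        also have "\<dots> = 8 * \<eta> powr (1 - t) / (\<delta>\<^sup>2 * c0 * \<kappa> n)" by (simp only: times_divide_times_eq)
        finally show ?thesis .
      qed
      finally show "measure (PiM {..<n} (\<lambda>_. Pxi)) {y \<in> space (PiM {..<n} (\<lambda>_. Pxi)). \<delta> * \<bar>b n\<bar> * R < \<bar>\<Sum>j<n. u j * y j\<bar>} \<le> G"
        by (simp add: G_def \<beta>_def)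
    qed
    then show ?thesis by (simp add: G_def \<tau>_def T_def \<beta>_def)
  qed
  show ?thesis
    unfolding f_def[symmetric]
  proof (rule crit0[OF _ f0])
    fix \<epsilon> :: real assume e: "\<epsilon> > 0"
    have ev_pw: "eventually (\<lambda>n. pwn n \<le> \<epsilon> / 3) sequentially"
    proof -
      have "eventually (\<lambda>n. pwn n < \<epsilon> / 3) sequentially" using order_tendstoD(2)[OF pwlim, of "\<epsilon> / 3"] e by simp
      then show ?thesis by (rule eventually_mono) simp
    qed
    have ev_rest: "eventually (\<lambda>n. f n - pwn n \<le> 2 * \<epsilon> / 3) sequentially"
    proof (cases "t < 1")
      case True
      obtain C where C: "C > 0" and hC: "\<And>n. real n powr (- t / (1 + t)) \<le> C * \<bar>b n\<bar>"
        using assms(4)[OF True] by blast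
      have s0: "s > 0" using t0 by (simp add: s_def)
      define \<kappa>0 where "\<kappa>0 = C powr (-s)"
      have k00: "\<kappa>0 > 0" using C by (simp add: \<kappa>0_def)
      have bnz: "b n \<noteq> 0" if "n > 0" for n
      proof -
        have "0 < real n powr (- t / (1 + t))" using that by simp
        then show ?thesis using hC[of n] by auto
      qed
      have kge: "\<kappa> n \<ge> \<kappa>0" if n: "n > 0" for n
      proof -
        have "(real n powr (- t / s)) powr s \<le> (C * \<bar>b n\<bar>) powr s"
          using hC[of n] s0 by (intro powr_mono2) (auto simp: s_def)
        moreover have "(real n powr (- t / s)) powr s = real n powr (- t)"
          using s0 by (simp add: powr_powr)
        moreover have "(C * \<bar>b n\<bar>) powr s = C powr s * \<bar>b n\<bar> powr s"
          using C by (simp add: powr_mult)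
        ultimately have "real n powr (-t) \<le> C powr s * \<bar>b n\<bar> powr s" by simp
        then have "real n powr (-t) * real n powr t \<le> C powr s * \<bar>b n\<bar> powr s * real n powr t"
          by (intro mult_right_mono) auto
        moreover have "real n powr (-t) * real n powr t = 1" using n by (simp add: powr_add[symmetric])
        ultimately have "1 \<le> C powr s * \<kappa> n" by (simp add: \<kappa>_def mult_ac)
        moreover have Cs: "C powr s > 0" using C by simp
        ultimately have "1 / C powr s \<le> \<kappa> n" by (simp add: divide_le_eq mult.commute)
        then show ?thesis by (simp add: \<kappa>0_def powr_minus_divide)
      qed
      define \<eta> where "\<eta> = (\<epsilon> * \<delta>\<^sup>2 * c0 * \<kappa>0 / 24) powr (1 / (1 - t))"
      have eta: "\<eta> > 0" using e d c0 k00 by (simp add: \<eta>_def)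
      have eta_pow: "\<eta> powr (1 - t) = \<epsilon> * \<delta>\<^sup>2 * c0 * \<kappa>0 / 24"
        using True e d c0 k00 by (simp add: \<eta>_def powr_powr)
      have Tlim: "filterlim (\<lambda>n. \<eta> * \<bar>b n\<bar> * real n) at_top sequentially"
      proof (rule filterlim_at_top_mono[OF filterlim_tendsto_pos_mult_at_top[OF tendsto_const _ nat_powr_at_top]])
        show "\<eta> / C > 0" using eta C by simp
        show "1 / s > 0" using s0 by simp
        show "\<forall>\<^sub>F n in sequentially. \<eta> / C * real n powr (1 / s) \<le> \<eta> * \<bar>b n\<bar> * real n"
          using eventually_gt_at_top[of "0::nat"]
        proof eventually_elim
          case (elim n)
          have e1: "1 / s = 1 + (- t / (1 + t))" using t0 by (simp add: s_def field_simps)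
          have "real n powr (1 / s) = real n powr 1 * real n powr (- t / (1 + t))"
            unfolding e1 by (rule powr_add)
          also have "\<dots> = real n * real n powr (- t / (1 + t))" by simp
          finally have "real n powr (1 / s) = real n * real n powr (- t / (1 + t))" .
          also have "\<dots> \<le> real n * (C * \<bar>b n\<bar>)" by (intro mult_left_mono hC) auto
          finally have "real n powr (1 / s) \<le> C * (\<bar>b n\<bar> * real n)" by (simp add: mult_ac)
          then have "\<eta> * real n powr (1 / s) \<le> \<eta> * (C * (\<bar>b n\<bar> * real n))"
            using eta by (intro mult_left_mono) auto
          then show ?case using C by (simp add: field_simps)
        qed
      qed
      have taulim: "((\<lambda>n. tau Pxi s (\<eta> * \<bar>b n\<bar> * real n)) \<longlongrightarrow> 0) sequentially"
        by (rule filterlim_compose[OF X.tau_lim Tlim])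
      define \<theta> where "\<theta> = min (\<epsilon> / 3 * \<eta> powr s * \<kappa>0) (sqrt c0 * \<delta> / 2 * \<eta> powr t * \<kappa>0)"
      have th0: "\<theta> > 0" using e eta k00 c0 d by (simp add: \<theta>_def)
      have ev_tau: "eventually (\<lambda>n. tau Pxi s (\<eta> * \<bar>b n\<bar> * real n) \<le> \<theta>) sequentially"
      proof -
        have "eventually (\<lambda>n. tau Pxi s (\<eta> * \<bar>b n\<bar> * real n) < \<theta>) sequentially"
          using order_tendstoD(2)[OF taulim, of \<theta>] th0 by simp
        then show ?thesis by (rule eventually_mono) simp
      qed
      show ?thesis
        using ev_tau eventually_gt_at_top[of "0::nat"]
      proof eventually_elim
        case (elim n)
        define \<tau> where "\<tau> = tau Pxi s (\<eta> * \<bar>b n\<bar> * real n)"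
        have \<tau>0: "0 \<le> \<tau>" unfolding \<tau>_def by (rule X.tau_nonneg)
        have kn: "\<kappa> n \<ge> \<kappa>0" using kge elim by simp
        have cond: "\<tau> \<le> sqrt c0 * \<delta> / 2 * \<eta> powr t * \<kappa> n"
        proof -
          have "\<tau> \<le> sqrt c0 * \<delta> / 2 * \<eta> powr t * \<kappa>0" using elim by (simp add: \<tau>_def \<theta>_def)
          also have "\<dots> \<le> sqrt c0 * \<delta> / 2 * \<eta> powr t * \<kappa> n"
            using kn c0 d by (intro mult_left_mono) auto
          finally show ?thesis .
        qed
        have st: "f n \<le> pwn n + (\<eta> powr (-s) * \<tau> / \<kappa> n + 8 * \<eta> powr (1 - t) / (\<delta>\<^sup>2 * c0 * \<kappa> n))"
          using step[OF elim(2) bnz[OF elim(2)] eta cond[unfolded \<tau>_def]] by (simp add: \<tau>_def)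
        have t1': "\<eta> powr (-s) * \<tau> / \<kappa> n \<le> \<epsilon> / 3"
        proof -
          have "\<eta> powr (-s) * \<tau> / \<kappa> n \<le> \<eta> powr (-s) * \<tau> / \<kappa>0"
            using kn k00 \<tau>0 by (intro divide_left_mono) auto
          also have "\<dots> \<le> \<eta> powr (-s) * (\<epsilon> / 3 * \<eta> powr s * \<kappa>0) / \<kappa>0"
            using elim k00 by (intro divide_right_mono mult_left_mono) (auto simp: \<tau>_def \<theta>_def)
          also have "\<dots> = \<epsilon> / 3 * (\<eta> powr (-s) * \<eta> powr s)" using k00 by (simp add: field_simps)
          also have "\<eta> powr (-s) * \<eta> powr s = 1" using eta by (simp add: powr_add[symmetric])
          finally show ?thesis by simp
        qed
        have t2': "8 * \<eta> powr (1 - t) / (\<delta>\<^sup>2 * c0 * \<kappa> n) \<le> \<epsilon> / 3"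
        proof -
          have "8 * \<eta> powr (1 - t) / (\<delta>\<^sup>2 * c0 * \<kappa> n) \<le> 8 * \<eta> powr (1 - t) / (\<delta>\<^sup>2 * c0 * \<kappa>0)"
            using kn k00 c0 d by (intro divide_left_mono mult_left_mono) auto
          also have "\<dots> = \<epsilon> / 3" unfolding eta_pow using k00 c0 d by (simp add: field_simps)
          finally show ?thesis .
        qed
        show ?case using st t1' t2' by linarith
      qed
    next
      case False
      then have t: "t = 1" using t1 by simp
      have s2: "s = 2" using t by (simp add: s_def)
      from assms(5)[OF t] have evb: "\<forall>\<^sub>F n in sequentially. b n \<noteq> 0"
        and q: "(\<lambda>n. real n powr (- 1 / 2) / \<bar>b n\<bar>) \<longlonglongrightarrow> 0" by auto
      have q2: "(\<lambda>n. (real n powr (- 1 / 2) / \<bar>b n\<bar>)\<^sup>2) \<longlonglongrightarrow> 0"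
        using tendsto_power[OF q, of 2] by simp
      have kinv: "1 / \<kappa> n = (real n powr (- 1 / 2) / \<bar>b n\<bar>)\<^sup>2" if "n > 0" "b n \<noteq> 0" for n
      proof -
        have "(real n powr (- 1 / 2))\<^sup>2 = real n powr (- 1 / 2) * real n powr (- 1 / 2)"
          by (simp add: power2_eq_square)
        also have "\<dots> = real n powr (- 1 / 2 + - 1 / 2)" by (rule powr_add[symmetric])
        also have "\<dots> = real n powr (-1)" by simp
        also have "\<dots> = 1 / real n" by (simp add: powr_minus_divide)
        finally have h1: "(real n powr (- 1 / 2))\<^sup>2 = 1 / real n" .
        have h2: "\<bar>b n\<bar> powr 2 = (b n)\<^sup>2" using that by (simp add: powr_numeral)
        have h3: "real n powr 1 = real n" by simp
        have "\<kappa> n = (b n)\<^sup>2 * real n" unfolding \<kappa>_def s2 t h2 h3 ..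
        then show ?thesis using that h1 by (simp add: power_divide)
      qed
      define K where "K = 2 + 8 / (\<delta>\<^sup>2 * c0)"
      have "0 < 8 / (\<delta>\<^sup>2 * c0)" using d c0 by (intro divide_pos_pos mult_pos_pos) auto
      then have K0: "K > 0" unfolding K_def by linarith
      define \<theta> where "\<theta> = min (2 * \<epsilon> / 3 / K) (sqrt c0 * \<delta> / 4)"
      have th0: "\<theta> > 0" using e K0 c0 d by (simp add: \<theta>_def)
      have evq: "eventually (\<lambda>n. (real n powr (- 1 / 2) / \<bar>b n\<bar>)\<^sup>2 \<le> \<theta>) sequentially"
      proof -
        have "eventually (\<lambda>n. (real n powr (- 1 / 2) / \<bar>b n\<bar>)\<^sup>2 < \<theta>) sequentially"
          using order_tendstoD(2)[OF q2, of \<theta>] th0 by simp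
        then show ?thesis by (rule eventually_mono) simp
      qed
      show ?thesis
        using evq evb eventually_gt_at_top[of "0::nat"]
      proof eventually_elim
        case (elim n)
        have ki: "1 / \<kappa> n \<le> \<theta>" using kinv[OF elim(3) elim(2)] elim(1) by simp
        have kp: "\<kappa> n > 0" using elim by (simp add: \<kappa>_def)
        define \<tau> where "\<tau> = tau Pxi s (1 * \<bar>b n\<bar> * real n)"
        have \<tau>0: "0 \<le> \<tau>" unfolding \<tau>_def by (rule X.tau_nonneg)
        have \<tau>2: "\<tau> \<le> 2" unfolding \<tau>_def by (rule X.tau_le)
        have cond: "\<tau> \<le> sqrt c0 * \<delta> / 2 * 1 powr t * \<kappa> n"
        proof -
          have "1 / \<kappa> n \<le> sqrt c0 * \<delta> / 4" using ki by (simp add: \<theta>_def)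
          then have "4 \<le> sqrt c0 * \<delta> * \<kappa> n" using kp by (simp add: field_simps)
          then show ?thesis using \<tau>2 by simp
        qed
        have st: "f n \<le> pwn n + (1 powr (-s) * \<tau> / \<kappa> n + 8 * 1 powr (1 - t) / (\<delta>\<^sup>2 * c0 * \<kappa> n))"
          using step[OF elim(3) elim(2) _ cond[unfolded \<tau>_def]] by (simp add: \<tau>_def)
        have "1 powr (-s) * \<tau> / \<kappa> n + 8 * 1 powr (1 - t) / (\<delta>\<^sup>2 * c0 * \<kappa> n) = (\<tau> + 8 / (\<delta>\<^sup>2 * c0)) * (1 / \<kappa> n)"
          using kp d c0 by (simp add: field_simps)
        also have "\<dots> \<le> K * \<theta>"
          using \<tau>2 ki kp \<tau>0 d c0 by (intro mult_mono) (auto simp: K_def)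
        also have "\<dots> \<le> K * (2 * \<epsilon> / 3 / K)" using K0 by (intro mult_left_mono) (auto simp: \<theta>_def)
        also have "\<dots> = 2 * \<epsilon> / 3" using K0 by simp
        finally show ?case using st by linarith
      qed
    qed
    show "eventually (\<lambda>n. f n \<le> \<epsilon>) sequentially"
      using ev_pw ev_rest by eventually_elim linarith
  qed
qed


end
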